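(* Let $k$ be a field, $E$ a finite-dimensional $k$-vector space, and $f\in\operatorname{End}_k(E)$ an endomorphism with annihilating polynomial $x^n$. Let $\bigcup_{j=1}^{r}\{e_j,f(e_j),\dots,f^{n_j-1}(e_j)\}$ be a Jordan basis of $E$ induced by $f$ (so $f^{n_j}(e_j)=0$ and these vectors form a basis of $E$). Then the generalized inverses $g\in\operatorname{End}_k(E)$ of $f$ are exactly the linear maps determined by $$g(f^i(e_j))=\begin{cases} f^{i-1}(e_j)+\sum_{s=1}^{r}\lambda^{s}_{j,i} f^{n_s-1}(e_s) & \text{if } i\ge 1,\\ \sum_{s=1}^{r}\sum_{h=0}^{n_s-1}\alpha^{s}_{j,h} f^{h}(e_s) & \text{if } i=0,\end{cases}$$ for $j\in\{1,\dots,r\}$ and $i\in\{0,\dots,n_j-1\}$, where $\lambda^{s}_{j,i},\alpha^{s}_{j,h}\in k$ are arbitrary scalars.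
   Context: A generalized inverse of an endomorphism $f$ of $E$ is an endomorphism $g$ of $E$ with $f\circ g\circ f=f$. *)

theory Defs
  imports Complex_Main
begin

definition gen_inverse :: "('k::field \<Rightarrow> 'e::ab_group_add \<Rightarrow> 'e) \<Rightarrow> ('e \<Rightarrow> 'e) \<Rightarrow> ('e \<Rightarrow> 'e) \<Rightarrow> bool" where
  "gen_inverse scale f g \<longleftrightarrow> Vector_Spaces.linear scale scale g \<and> f \<circ> g \<circ> f = f"

definition jordan_basis ::
  "('k::field \<Rightarrow> 'e::ab_group_add \<Rightarrow> 'e) \<Rightarrow> ('e \<Rightarrow> 'e) \<Rightarrow> nat \<Rightarrow> (nat \<Rightarrow> 'e) \<Rightarrow> (nat \<Rightarrow> nat) \<Rightarrow> bool" where
  "jordan_basis scale f r e nn \<longleftrightarrow>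
     (\<forall>j<r. 1 \<le> nn j \<and> (f ^^ nn j) (e j) = 0) \<and>
     inj_on (\<lambda>(j, i). (f ^^ i) (e j)) {(j, i). j < r \<and> i < nn j} \<and>
     \<not> module.dependent scale ((\<lambda>(j, i). (f ^^ i) (e j)) ` {(j, i). j < r \<and> i < nn j}) \<and>
     module.span scale ((\<lambda>(j, i). (f ^^ i) (e j)) ` {(j, i). j < r \<and> i < nn j}) = UNIV"

end

theory Submission
  imports Defs
begin

locale jbctx = vector_space scale for scale :: "'k::field \<Rightarrow> 'e::ab_group_add \<Rightarrow> 'e" +
  fixes f :: "'e \<Rightarrow> 'e" and r :: nat and e :: "nat \<Rightarrow> 'e" and nn :: "nat \<Rightarrow> nat"
  assumes lf: "Vector_Spaces.linear scale scale f" and jb: "jordan_basis scale f r e nn"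
begin

definition II :: "(nat \<times> nat) set" where "II = {(j, i). j < r \<and> i < nn j}"
definition BB :: "nat \<times> nat \<Rightarrow> 'e" where "BB = (\<lambda>(j, i). (f ^^ i) (e j))"
definition lin :: "(nat \<Rightarrow> nat \<Rightarrow> 'k) \<Rightarrow> 'e" where
  "lin c = (\<Sum>s<r. \<Sum>h<nn s. scale (c s h) ((f ^^ h) (e s)))"

lemma nn_pos: "j < r \<Longrightarrow> 1 \<le> nn j" and nn_zero: "j < r \<Longrightarrow> (f ^^ nn j) (e j) = 0"
  using jb unfolding jordan_basis_def by auto

lemma II_Sigma: "II = Sigma {..<r} (\<lambda>s. {..<nn s})"
  unfolding II_def by auto

lemma fin: "finite II" unfolding II_Sigma by auto

lemma injB: "inj_on BB II" using jb unfolding jordan_basis_def II_def BB_def by auto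
lemma indepB: "\<not> dependent (BB ` II)" using jb unfolding jordan_basis_def II_def BB_def by auto
lemma spanB: "span (BB ` II) = UNIV" using jb unfolding jordan_basis_def II_def BB_def by auto

lemma lin_conv: "lin c = (\<Sum>p\<in>II. scale (c (fst p) (snd p)) (BB p))"
  unfolding lin_def II_Sigma BB_def
  by (subst sum.Sigma) (auto simp: case_prod_beta)

lemma repr: "\<exists>c. v = lin c"
proof -
  have "v \<in> span (BB ` II)" using spanB by auto
  then obtain u where u: "v = (\<Sum>w\<in>BB ` II. scale (u w) w)"
    using span_finite[of "BB ` II"] fin by auto
  also have "\<dots> = (\<Sum>p\<in>II. scale (u (BB p)) (BB p))"
    by (rule sum.reindex[OF injB, unfolded comp_def])
  also have "\<dots> = lin (\<lambda>s h. u (BB (s, h)))"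
    unfolding lin_conv by simp
  finally show ?thesis by blast
qed

lemma uniq0:
  assumes "lin c = 0" "s < r" "h < nn s"
  shows "c s h = 0"
proof -
  define u where "u w = (case inv_into II BB w of (s, h) \<Rightarrow> c s h)" for w
  have "(\<Sum>w\<in>BB ` II. scale (u w) w) = (\<Sum>p\<in>II. scale (u (BB p)) (BB p))"
    by (rule sum.reindex[OF injB, unfolded comp_def])
  also have "\<dots> = (\<Sum>p\<in>II. scale (c (fst p) (snd p)) (BB p))"
    by (rule sum.cong) (auto simp: u_def inv_into_f_f[OF injB])
  also have "\<dots> = 0" using assms(1) lin_conv by simp
  finally have "\<forall>w\<in>BB ` II. u w = 0"
    using indepB dependent_finite[of "BB ` II"] fin by auto
  moreover have "(s, h) \<in> II" using assms unfolding II_def by auto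
  ultimately have "u (BB (s, h)) = 0" by auto
  then show ?thesis using \<open>(s, h) \<in> II\<close> by (simp add: u_def inv_into_f_f[OF injB])
qed

lemma lin_diff: "lin c - lin d = lin (\<lambda>s h. c s h - d s h)"
  unfolding lin_def by (simp add: scale_left_diff_distrib sum_subtractf)

lemma uniq:
  assumes "lin c = lin d" "s < r" "h < nn s"
  shows "c s h = d s h"
  using uniq0[of "\<lambda>s h. c s h - d s h" s h] assms lin_diff[of c d] by simp

lemma kernel:
  assumes "f v = 0"
  shows "\<exists>\<mu>. v = (\<Sum>s<r. scale (\<mu> s) ((f ^^ (nn s - 1)) (e s)))"
proof -
  interpret F: Vector_Spaces.linear scale scale f by (rule lf)
  obtain c where c: "v = lin c" using repr by blast
  define d where "d s h = (if h = 0 then 0 else c s (h - 1))" for s h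
  have inner: "(\<Sum>h<nn s. scale (c s h) ((f ^^ Suc h) (e s))) = (\<Sum>h<nn s. scale (d s h) ((f ^^ h) (e s)))"
    if sr: "s < r" for s
  proof -
    obtain m where m: "nn s = Suc m" using nn_pos[OF sr] by (cases "nn s") auto
    have z: "(f ^^ Suc m) (e s) = 0" using nn_zero[OF sr] m by simp
    have "(\<Sum>h<Suc m. scale (c s h) ((f ^^ Suc h) (e s))) = (\<Sum>h<m. scale (c s h) ((f ^^ Suc h) (e s)))"
      by (simp only: sum.lessThan_Suc z) simp
    moreover have "(\<Sum>h<Suc m. scale (d s h) ((f ^^ h) (e s))) = (\<Sum>h<m. scale (c s h) ((f ^^ Suc h) (e s)))"
      by (simp only: sum.lessThan_Suc_shift) (simp add: d_def del: funpow.simps)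
    ultimately show ?thesis unfolding m by simp
  qed
  have "0 = f v" using assms by simp
  also have "\<dots> = (\<Sum>s<r. \<Sum>h<nn s. scale (c s h) ((f ^^ Suc h) (e s)))"
    unfolding c lin_def by (simp add: F.sum F.scale)
  also have "\<dots> = lin d"
    unfolding lin_def by (rule sum.cong) (use inner in auto)
  finally have d0: "s < r \<Longrightarrow> h < nn s \<Longrightarrow> d s h = 0" for s h
    using uniq0[of d] by metis
  have inner2: "(\<Sum>h<nn s. scale (c s h) ((f ^^ h) (e s))) = scale (c s (nn s - 1)) ((f ^^ (nn s - 1)) (e s))"
    if sr: "s < r" for s
  proof -
    obtain m where m: "nn s = Suc m" using nn_pos[OF sr] by (cases "nn s") auto
    have "h < m \<Longrightarrow> c s h = 0" for h using d0[OF sr, of "Suc h"] m by (simp add: d_def)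
    then show ?thesis unfolding m by (simp add: sum.lessThan_Suc)
  qed
  have "v = (\<Sum>s<r. scale (c s (nn s - 1)) ((f ^^ (nn s - 1)) (e s)))"
    unfolding c lin_def by (rule sum.cong) (auto simp: inner2)
  then show ?thesis by (intro exI[of _ "\<lambda>s. c s (nn s - 1)"])
qed

lemma kernel_conv: "f (\<Sum>s<r. scale (\<mu> s) ((f ^^ (nn s - 1)) (e s))) = 0"
proof -
  interpret F: Vector_Spaces.linear scale scale f by (rule lf)
  have "s < r \<Longrightarrow> f ((f ^^ (nn s - 1)) (e s)) = 0" for s
    using nn_zero[of s] nn_pos[of s] by (cases "nn s") auto
  then show ?thesis by (simp add: F.sum F.scale)
qed

end

theorem lemma3p9:
  fixes scale :: "'k::field \<Rightarrow> 'e::ab_group_add \<Rightarrow> 'e"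
    and f :: "'e \<Rightarrow> 'e" and n r :: nat and e :: "nat \<Rightarrow> 'e" and nn :: "nat \<Rightarrow> nat"
  assumes "vector_space scale"
    and "Vector_Spaces.linear scale scale f"
    and "f ^^ n = (\<lambda>_. 0)"
    and "jordan_basis scale f r e nn"
  shows "(\<forall>g. gen_inverse scale f g \<longleftrightarrow>
            Vector_Spaces.linear scale scale g \<and>
            (\<exists>lam \<alpha> :: nat \<Rightarrow> nat \<Rightarrow> nat \<Rightarrow> 'k.
               \<forall>j<r. \<forall>i<nn j.
                 g ((f ^^ i) (e j)) =
                   (if 1 \<le> i
                    then (f ^^ (i - 1)) (e j) + (\<Sum>s<r. scale (lam s j i) ((f ^^ (nn s - 1)) (e s)))
                    else (\<Sum>s<r. \<Sum>h<nn s. scale (\<alpha> s j h) ((f ^^ h) (e s))))))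
       \<and> (\<forall>lam \<alpha> :: nat \<Rightarrow> nat \<Rightarrow> nat \<Rightarrow> 'k. \<exists>g. Vector_Spaces.linear scale scale g \<and>
               (\<forall>j<r. \<forall>i<nn j.
                 g ((f ^^ i) (e j)) =
                   (if 1 \<le> i
                    then (f ^^ (i - 1)) (e j) + (\<Sum>s<r. scale (lam s j i) ((f ^^ (nn s - 1)) (e s)))
                    else (\<Sum>s<r. \<Sum>h<nn s. scale (\<alpha> s j h) ((f ^^ h) (e s))))))"
proof -
  interpret J: jbctx scale f r e nn
    using assms(1,2,4) by (simp add: jbctx_def jbctx_axioms_def)
  interpret VP: vector_space_pair scale scale
    using assms(1) by (simp add: vector_space_pair_def)
  interpret F: Vector_Spaces.linear scale scale f by (rule assms(2))
  have BBji: "J.BB (j, i) = (f ^^ i) (e j)" for j i by (simp add: J.BB_def)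
  have inII: "j < r \<Longrightarrow> i < nn j \<Longrightarrow> (j, i) \<in> J.II" for j i by (simp add: J.II_def)
  have part1: "gen_inverse scale f g \<longleftrightarrow>
            Vector_Spaces.linear scale scale g \<and>
            (\<exists>lam \<alpha> :: nat \<Rightarrow> nat \<Rightarrow> nat \<Rightarrow> 'k.
               \<forall>j<r. \<forall>i<nn j.
                 g ((f ^^ i) (e j)) =
                   (if 1 \<le> i
                    then (f ^^ (i - 1)) (e j) + (\<Sum>s<r. scale (lam s j i) ((f ^^ (nn s - 1)) (e s)))
                    else (\<Sum>s<r. \<Sum>h<nn s. scale (\<alpha> s j h) ((f ^^ h) (e s)))))" for g
  proof
    assume gi: "gen_inverse scale f g"
    then have lg: "Vector_Spaces.linear scale scale g" and fgf0: "f \<circ> g \<circ> f = f"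
      by (auto simp: gen_inverse_def)
    have fgf: "f (g (f x)) = f x" for x using fgf0 by (metis comp_apply)
    have "\<forall>j i. \<exists>\<mu>. 1 \<le> i \<longrightarrow> g ((f ^^ i) (e j)) =
        (f ^^ (i - 1)) (e j) + (\<Sum>s<r. scale (\<mu> s) ((f ^^ (nn s - 1)) (e s)))"
    proof (intro allI)
      fix j i :: nat
      show "\<exists>\<mu>. 1 \<le> i \<longrightarrow> g ((f ^^ i) (e j)) =
        (f ^^ (i - 1)) (e j) + (\<Sum>s<r. scale (\<mu> s) ((f ^^ (nn s - 1)) (e s)))"
      proof (cases i)
        case 0 then show ?thesis by simp
      next
        case (Suc k)
        have "f (g ((f ^^ i) (e j)) - (f ^^ k) (e j)) = 0"
          using fgf[of "(f ^^ k) (e j)"] by (simp add: Suc F.diff)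
        then obtain \<mu> where "g ((f ^^ i) (e j)) - (f ^^ k) (e j) = (\<Sum>s<r. scale (\<mu> s) ((f ^^ (nn s - 1)) (e s)))"
          using J.kernel by blast
        then show ?thesis using Suc by (intro exI[of _ \<mu>]) (simp add: algebra_simps)
      qed
    qed
    then obtain M where M: "\<And>j i. 1 \<le> i \<Longrightarrow> g ((f ^^ i) (e j)) =
        (f ^^ (i - 1)) (e j) + (\<Sum>s<r. scale (M j i s) ((f ^^ (nn s - 1)) (e s)))"
      by metis
    have "\<forall>j. \<exists>c. g (e j) = J.lin c" using J.repr by blast
    then obtain C where C: "\<And>j. g (e j) = J.lin (C j)" by metis
    show "Vector_Spaces.linear scale scale g \<and>
            (\<exists>lam \<alpha> :: nat \<Rightarrow> nat \<Rightarrow> nat \<Rightarrow> 'k.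
               \<forall>j<r. \<forall>i<nn j.
                 g ((f ^^ i) (e j)) =
                   (if 1 \<le> i
                    then (f ^^ (i - 1)) (e j) + (\<Sum>s<r. scale (lam s j i) ((f ^^ (nn s - 1)) (e s)))
                    else (\<Sum>s<r. \<Sum>h<nn s. scale (\<alpha> s j h) ((f ^^ h) (e s)))))"
      apply (rule conjI[OF lg])
      apply (rule exI[of _ "\<lambda>s j i. M j i s"])
      apply (rule exI[of _ "\<lambda>s j h. C j s h"])
      apply (intro allI impI)
      subgoal for j i
      proof (cases "i = 0")
        case True then show ?thesis by (simp add: C J.lin_def)
      next
        case False
        then have i1: "1 \<le> i" by simp
        show ?thesis unfolding if_P[OF i1] by (rule M[OF i1])
      qed
      done
  next
    assume H: "Vector_Spaces.linear scale scale g \<and>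
            (\<exists>lam \<alpha> :: nat \<Rightarrow> nat \<Rightarrow> nat \<Rightarrow> 'k.
               \<forall>j<r. \<forall>i<nn j.
                 g ((f ^^ i) (e j)) =
                   (if 1 \<le> i
                    then (f ^^ (i - 1)) (e j) + (\<Sum>s<r. scale (lam s j i) ((f ^^ (nn s - 1)) (e s)))
                    else (\<Sum>s<r. \<Sum>h<nn s. scale (\<alpha> s j h) ((f ^^ h) (e s)))))"
    then have lg: "Vector_Spaces.linear scale scale g" by blast
    interpret G: Vector_Spaces.linear scale scale g by (rule lg)
    from H obtain lam \<alpha> where LL: "\<forall>j<r. \<forall>i<nn j.
                 g ((f ^^ i) (e j)) =
                   (if 1 \<le> i
                    then (f ^^ (i - 1)) (e j) + (\<Sum>s<r. scale (lam s j i) ((f ^^ (nn s - 1)) (e s)))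
                    else (\<Sum>s<r. \<Sum>h<nn s. scale (\<alpha> s j h) ((f ^^ h) (e s))))" by blast
    have L: "g ((f ^^ i) (e j)) = (f ^^ (i - 1)) (e j) + (\<Sum>s<r. scale (lam s j i) ((f ^^ (nn s - 1)) (e s)))"
      if "j < r" "i < nn j" "1 \<le> i" for j i
      using LL[rule_format, OF that(1,2)] unfolding if_P[OF that(3)] .
    have lfgf: "Vector_Spaces.linear scale scale (f \<circ> g \<circ> f)"
      using Vector_Spaces.linear_compose[OF assms(2) Vector_Spaces.linear_compose[OF lg assms(2)]]
      by (simp add: comp_assoc)
    have "(f \<circ> g \<circ> f) x = f x" for x
    proof (rule VP.linear_eq_on[OF lfgf assms(2)])
      show "x \<in> J.span (J.BB ` J.II)" using J.spanB by simp
    next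
      fix b assume "b \<in> J.BB ` J.II"
      then obtain j i where ji: "j < r" "i < nn j" and b: "b = (f ^^ i) (e j)"
        by (auto simp: J.II_def J.BB_def)
      show "(f \<circ> g \<circ> f) b = f b"
      proof (cases "Suc i < nn j")
        case True
        have "g (f b) = (f ^^ i) (e j) + (\<Sum>s<r. scale (lam s j (Suc i)) ((f ^^ (nn s - 1)) (e s)))"
          using L[OF ji(1) True] b by simp
        then show ?thesis using J.kernel_conv[of "\<lambda>s. lam s j (Suc i)"] b by (simp add: F.add)
      next
        case False
        then have "nn j = Suc i" using ji by simp
        then have "f b = 0" using J.nn_zero[OF ji(1)] b by simp
        then show ?thesis by simp
      qed
    qed
    then show "gen_inverse scale f g" using lg by (auto simp: gen_inverse_def)
  qed
  have part2: "\<exists>g. Vector_Spaces.linear scale scale g \<and>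
               (\<forall>j<r. \<forall>i<nn j.
                 g ((f ^^ i) (e j)) =
                   (if 1 \<le> i
                    then (f ^^ (i - 1)) (e j) + (\<Sum>s<r. scale (lam s j i) ((f ^^ (nn s - 1)) (e s)))
                    else (\<Sum>s<r. \<Sum>h<nn s. scale (\<alpha> s j h) ((f ^^ h) (e s)))))"
    for lam \<alpha> :: "nat \<Rightarrow> nat \<Rightarrow> nat \<Rightarrow> 'k"
  proof -
    define T where "T w = (case inv_into J.II J.BB w of (j, i) \<Rightarrow>
                   (if 1 \<le> i
                    then (f ^^ (i - 1)) (e j) + (\<Sum>s<r. scale (lam s j i) ((f ^^ (nn s - 1)) (e s)))
                    else (\<Sum>s<r. \<Sum>h<nn s. scale (\<alpha> s j h) ((f ^^ h) (e s)))))" for w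
    obtain g where lg: "Vector_Spaces.linear scale scale g" and gT: "\<forall>x\<in>J.BB ` J.II. g x = T x"
      using VP.linear_independent_extend[OF J.indepB] by blast
    show ?thesis
    proof (intro exI[of _ g] conjI allI impI)
      show "Vector_Spaces.linear scale scale g" by (rule lg)
      fix j i assume ji: "j < r" "i < nn j"
      have "g (J.BB (j, i)) = T (J.BB (j, i))" using gT inII[OF ji] by blast
      then show "g ((f ^^ i) (e j)) =
                   (if 1 \<le> i
                    then (f ^^ (i - 1)) (e j) + (\<Sum>s<r. scale (lam s j i) ((f ^^ (nn s - 1)) (e s)))
                    else (\<Sum>s<r. \<Sum>h<nn s. scale (\<alpha> s j h) ((f ^^ h) (e s))))"
        using inv_into_f_f[OF J.injB inII[OF ji]] by (simp add: T_def BBji)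
    qed
  qed
  show ?thesis using part1 part2 by blast
qed

end
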